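(* Let $G=(V,E)$ be a $k$-colorable chordal graph and let $T$ be a clique of $G$ such that $(G,T)$ is the join of $(G_1,T)$ and $(G_2,T)$. If one of $\mathcal{C}^c_k(G_1,T)$ and $\mathcal{C}^c_k(G_2,T)$ is an $(m,k)$-color-complete graph (for some $m$), then $\mathcal{C}^c_k(G,T)$ equals (up to label-preserving isomorphism) the other one. If both $\mathcal{C}^c_k(G_1,T)$ and $\mathcal{C}^c_k(G_2,T)$ are forests satisfying the injective neighborhood property, then $\mathcal{C}^c_k(G,T)$ is a forest satisfying the injective neighborhood property.
   Context: A chordal graph has no induced cycle of length $>3$. $(G,T)$ is the join of $(G_1,T)$ and $(G_2,T)$ if $G_1,G_2$ are induced subgraphs of $G$, $V(G_1)\cap V(G_2)=T$, $V(G_1)\cup V(G_2)=V(G)$, $V(G_1)\ne T\ne V(G_2)$, and every edge of $G$ lies in $G_1$ or $G_2$. A $k$-coloring of $G$ is a map $\alpha:V(G)\to\{1,\dots,k\}$ with $\alpha(u)\ne\alpha(w)$ for all edges $uw$. $\mathcal{C}_k(G)$ has the $k$-colorings as nodes, adjacent iff they differ on exactly one vertex. For $T\subseteq V(G)$, label each coloring $\gamma$ by $\gamma|_T$. A label component is a maximal set of colorings with the same label inducing a connected subgraph of $\mathcal{C}_k(G)$. The contracted solution graph $\mathcal{C}^c_k(G,T)=(H,\ell)$ has one node $x$ per label component $S_x$, distinct $x,y$ adjacent iff some $\gamma\in S_x,\gamma'\in S_y$ are adjacent in $\mathcal{C}_k(G)$, and $\ell(x)$ the common label on $S_x$. For $1\le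 m\le k$, a labeled graph $(H,\ell)$ is $(m,k)$-color-complete if there is a set $T$ with $|T|=m$ such that every label is a $k$-coloring of the complete graph on $T$, every such $k$-coloring is the label of exactly one node, and two nodes are adjacent iff their labels differ on exactly one element of $T$. $(H,\ell)$ satisfies the injective neighborhood property if any two distinct neighbors of any node have distinct labels. *)

theory Defs
  imports Main
begin

definition graph :: "'v set \<Rightarrow> 'v set set \<Rightarrow> bool" where
  "graph V E \<longleftrightarrow> finite V \<and> (\<forall>e\<in>E. \<exists>u w. e = {u, w} \<and> u \<noteq> w \<and> u \<in> V \<and> w \<in> V)"

definition induced :: "'v set set \<Rightarrow> 'v set \<Rightarrow> 'v set set" where
  "induced E U = {e \<in> E. e \<subseteq> U}"

definition complete_edges :: "'v set \<Rightarrow> 'v set set" where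
  "complete_edges U = {{u, w} | u w. u \<in> U \<and> w \<in> U \<and> u \<noteq> w}"

definition is_clique :: "'v set \<Rightarrow> 'v set set \<Rightarrow> 'v set \<Rightarrow> bool" where
  "is_clique V E T \<longleftrightarrow> T \<subseteq> V \<and> (\<forall>u\<in>T. \<forall>w\<in>T. u \<noteq> w \<longrightarrow> {u, w} \<in> E)"

definition induced_cycle :: "'v set \<Rightarrow> 'v set set \<Rightarrow> 'v list \<Rightarrow> bool" where
  "induced_cycle V E cs \<longleftrightarrow> distinct cs \<and> set cs \<subseteq> V \<and>
     (\<forall>i < length cs. \<forall>j < length cs. i \<noteq> j \<longrightarrow>
        ({cs ! i, cs ! j} \<in> E \<longleftrightarrow> (j = Suc i mod length cs \<or> i = Suc j mod length cs)))"

definition chordal :: "'v set \<Rightarrow> 'v set set \<Rightarrow> bool" where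
  "chordal V E \<longleftrightarrow> \<not> (\<exists>cs. length cs > 3 \<and> induced_cycle V E cs)"

definition is_join :: "'v set \<Rightarrow> 'v set set \<Rightarrow> 'v set \<Rightarrow> 'v set \<Rightarrow> 'v set \<Rightarrow> bool" where
  "is_join V E T V1 V2 \<longleftrightarrow> V1 \<subseteq> V \<and> V2 \<subseteq> V \<and> V1 \<inter> V2 = T \<and> V1 \<union> V2 = V \<and>
     V1 \<noteq> T \<and> V2 \<noteq> T \<and> (\<forall>e\<in>E. e \<in> induced E V1 \<or> e \<in> induced E V2)"

text \<open>k-colorings, represented extensionally (value 0 outside V), colors 1..k.\<close>
definition coloring :: "'v set \<Rightarrow> 'v set set \<Rightarrow> nat \<Rightarrow> ('v \<Rightarrow> nat) \<Rightarrow> bool" where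
  "coloring V E k \<alpha> \<longleftrightarrow> (\<forall>v\<in>V. \<alpha> v \<in> {1..k}) \<and> (\<forall>v. v \<notin> V \<longrightarrow> \<alpha> v = 0) \<and>
     (\<forall>u w. {u, w} \<in> E \<longrightarrow> u \<noteq> w \<longrightarrow> \<alpha> u \<noteq> \<alpha> w)"

definition colorings :: "'v set \<Rightarrow> 'v set set \<Rightarrow> nat \<Rightarrow> ('v \<Rightarrow> nat) set" where
  "colorings V E k = {\<alpha>. coloring V E k \<alpha>}"

definition colorable :: "'v set \<Rightarrow> 'v set set \<Rightarrow> nat \<Rightarrow> bool" where
  "colorable V E k \<longleftrightarrow> colorings V E k \<noteq> {}"

definition col_adj :: "('v \<Rightarrow> nat) \<Rightarrow> ('v \<Rightarrow> nat) \<Rightarrow> bool" where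
  "col_adj \<alpha> \<beta> \<longleftrightarrow> card {v. \<alpha> v \<noteq> \<beta> v} = 1"

definition label :: "'v set \<Rightarrow> ('v \<Rightarrow> nat) \<Rightarrow> ('v \<Rightarrow> nat)" where
  "label T \<gamma> = (\<lambda>v. if v \<in> T then \<gamma> v else 0)"

definition induces_connected :: "('v \<Rightarrow> nat) set \<Rightarrow> bool" where
  "induces_connected S \<longleftrightarrow> (\<forall>\<alpha>\<in>S. \<forall>\<beta>\<in>S. (\<alpha>, \<beta>) \<in> ({(x, y). col_adj x y} \<inter> S \<times> S)\<^sup>*)"

definition same_label_conn :: "'v set \<Rightarrow> 'v set set \<Rightarrow> nat \<Rightarrow> 'v set \<Rightarrow> ('v \<Rightarrow> nat) set \<Rightarrow> bool" where
  "same_label_conn V E k T S \<longleftrightarrow> S \<noteq> {} \<and> S \<subseteq> colorings V E k \<and>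
     (\<forall>\<alpha>\<in>S. \<forall>\<beta>\<in>S. label T \<alpha> = label T \<beta>) \<and> induces_connected S"

definition label_component :: "'v set \<Rightarrow> 'v set set \<Rightarrow> nat \<Rightarrow> 'v set \<Rightarrow> ('v \<Rightarrow> nat) set \<Rightarrow> bool" where
  "label_component V E k T S \<longleftrightarrow> same_label_conn V E k T S \<and>
     (\<forall>S'. S \<subseteq> S' \<and> same_label_conn V E k T S' \<longrightarrow> S' = S)"

text \<open>Contracted solution graph C^c_k(G,T) = (H, l): nodes are the label components.\<close>
definition csg_nodes :: "'v set \<Rightarrow> 'v set set \<Rightarrow> nat \<Rightarrow> 'v set \<Rightarrow> ('v \<Rightarrow> nat) set set" where
  "csg_nodes V E k T = {S. label_component V E k T S}"

definition csg_edges :: "'v set \<Rightarrow> 'v set set \<Rightarrow> nat \<Rightarrow> 'v set \<Rightarrow> ('v \<Rightarrow> nat) set set set" where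
  "csg_edges V E k T = {{x, y} | x y. x \<in> csg_nodes V E k T \<and> y \<in> csg_nodes V E k T \<and> x \<noteq> y \<and>
      (\<exists>\<gamma>\<in>x. \<exists>\<gamma>'\<in>y. col_adj \<gamma> \<gamma>')}"

definition csg_label :: "'v set \<Rightarrow> ('v \<Rightarrow> nat) set \<Rightarrow> ('v \<Rightarrow> nat)" where
  "csg_label T x = label T (SOME \<gamma>. \<gamma> \<in> x)"

definition color_complete ::
  "nat \<Rightarrow> nat \<Rightarrow> 'n set \<Rightarrow> 'n set set \<Rightarrow> ('n \<Rightarrow> ('a \<Rightarrow> nat)) \<Rightarrow> bool" where
  "color_complete m k N A l \<longleftrightarrow> 1 \<le> m \<and> m \<le> k \<and>
     (\<exists>T'. finite T' \<and> card T' = m \<and>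
        (\<forall>x\<in>N. coloring T' (complete_edges T') k (l x)) \<and>
        (\<forall>c. coloring T' (complete_edges T') k c \<longrightarrow> (\<exists>!x. x \<in> N \<and> l x = c)) \<and>
        (\<forall>x\<in>N. \<forall>y\<in>N. {x, y} \<in> A \<longleftrightarrow> card {v \<in> T'. l x v \<noteq> l y v} = 1))"

definition injective_nbh :: "'n set \<Rightarrow> 'n set set \<Rightarrow> ('n \<Rightarrow> 'l) \<Rightarrow> bool" where
  "injective_nbh N A l \<longleftrightarrow> (\<forall>x\<in>N. \<forall>y\<in>N. \<forall>z\<in>N.
     {x, y} \<in> A \<and> {x, z} \<in> A \<and> y \<noteq> x \<and> z \<noteq> x \<and> y \<noteq> z \<longrightarrow> l y \<noteq> l z)"

definition has_cycle :: "'n set \<Rightarrow> 'n set set \<Rightarrow> bool" where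
  "has_cycle N A \<longleftrightarrow> (\<exists>cs. length cs \<ge> 3 \<and> distinct cs \<and> set cs \<subseteq> N \<and>
     (\<forall>i < length cs. {cs ! i, cs ! (Suc i mod length cs)} \<in> A))"

definition forest :: "'n set \<Rightarrow> 'n set set \<Rightarrow> bool" where
  "forest N A \<longleftrightarrow> \<not> has_cycle N A"

definition labeled_iso ::
  "'n set \<Rightarrow> 'n set set \<Rightarrow> ('n \<Rightarrow> 'l) \<Rightarrow> 'm set \<Rightarrow> 'm set set \<Rightarrow> ('m \<Rightarrow> 'l) \<Rightarrow> bool" where
  "labeled_iso N1 A1 l1 N2 A2 l2 \<longleftrightarrow> (\<exists>f. bij_betw f N1 N2 \<and>
     (\<forall>x\<in>N1. \<forall>y\<in>N1. {x, y} \<in> A1 \<longleftrightarrow> {f x, f y} \<in> A2) \<and>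
     (\<forall>x\<in>N1. l2 (f x) = l1 x))"

end

theory Submission
  imports Defs
begin

definition Rel :: "'v set \<Rightarrow> 'v set set \<Rightarrow> nat \<Rightarrow> 'v set \<Rightarrow> (('v \<Rightarrow> nat) \<times> ('v \<Rightarrow> nat)) set" where
  "Rel V E k T = {(x,y). x \<in> colorings V E k \<and> y \<in> colorings V E k \<and> col_adj x y \<and> label T x = label T y}"

definition cls :: "'v set \<Rightarrow> 'v set set \<Rightarrow> nat \<Rightarrow> 'v set \<Rightarrow> ('v \<Rightarrow> nat) \<Rightarrow> ('v \<Rightarrow> nat) set" where
  "cls V E k T a = (Rel V E k T)\<^sup>* `` {a}"

definition restr :: "'v set \<Rightarrow> ('v \<Rightarrow> nat) \<Rightarrow> ('v \<Rightarrow> nat)" where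
  "restr U g = (\<lambda>v. if v \<in> U then g v else 0)"

lemma col_adj_sym: "col_adj a b = col_adj b a"
proof -
  have "{v. a v \<noteq> b v} = {v. b v \<noteq> a v}" by auto
  thus ?thesis by (simp add: col_adj_def)
qed

lemma col_adj_iff: "col_adj a b \<longleftrightarrow> (\<exists>v. {w. a w \<noteq> b w} = {v})"
  unfolding col_adj_def by (simp add: card_1_singleton_iff)

lemma Rel_sym: "(x,y) \<in> Rel V E k T \<Longrightarrow> (y,x) \<in> Rel V E k T"
  unfolding Rel_def using col_adj_sym by auto

lemma rtr_sym_gen: "sym Q \<Longrightarrow> (x,y) \<in> Q\<^sup>* \<Longrightarrow> (y,x) \<in> Q\<^sup>*"
  using sym_rtrancl by (metis symD)

lemma Rel_symm: "sym (Rel V E k T)"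
  by (meson Rel_sym symI)

lemma Rel_rt_sym: "(x,y) \<in> (Rel V E k T)\<^sup>* \<Longrightarrow> (y,x) \<in> (Rel V E k T)\<^sup>*"
  using rtr_sym_gen Rel_symm by metis

lemma Rel_label: "(x,y) \<in> (Rel V E k T)\<^sup>* \<Longrightarrow> label T x = label T y"
  by (induction rule: rtrancl_induct) (auto simp: Rel_def)

lemma Rel_col: "(x,y) \<in> (Rel V E k T)\<^sup>* \<Longrightarrow> x \<in> colorings V E k \<Longrightarrow> y \<in> colorings V E k"
  by (induction rule: rtrancl_induct) (auto simp: Rel_def)

lemma cls_self: "a \<in> cls V E k T a" by (simp add: cls_def)

lemma cls_mem: "b \<in> cls V E k T a \<longleftrightarrow> (a,b) \<in> (Rel V E k T)\<^sup>*"
  by (simp add: cls_def)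

lemma cls_slc:
  assumes a: "a \<in> colorings V E k"
  shows "same_label_conn V E k T (cls V E k T a)"
proof -
  let ?S = "cls V E k T a"
  let ?Q = "{(x, y). col_adj x y} \<inter> ?S \<times> ?S"
  have aS: "a \<in> ?S" by (simp add: cls_def)
  have sub: "?S \<subseteq> colorings V E k"
  proof
    fix x assume "x \<in> ?S"
    then have "(a,x) \<in> (Rel V E k T)\<^sup>*" by (simp add: cls_mem)
    then show "x \<in> colorings V E k" using Rel_col a by blast
  qed
  have lab: "label T x = label T a" if "x \<in> ?S" for x
  proof -
    from that have "(a,x) \<in> (Rel V E k T)\<^sup>*" by (simp add: cls_mem)
    then show ?thesis using Rel_label by metis
  qed
  have pth: "(a,b) \<in> ?Q\<^sup>*" if "(a,b) \<in> (Rel V E k T)\<^sup>*" for b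
    using that
  proof (induction rule: rtrancl_induct)
    case base then show ?case by simp
  next
    case (step y z)
    have yS: "y \<in> ?S" using step(1) by (simp add: cls_mem)
    have zS: "z \<in> ?S" using step(1) step(2) by (simp add: cls_mem)
    have "col_adj y z" using step(2) by (simp add: Rel_def)
    then have "(y,z) \<in> ?Q" using yS zS by simp
    then show ?case using step(3) by (rule rtrancl_into_rtrancl[rotated])
  qed
  have symQ: "sym ?Q"
  proof (rule symI)
    fix x y assume "(x,y) \<in> ?Q"
    then show "(y,x) \<in> ?Q" using col_adj_sym[of x y] by simp
  qed
  have conn: "induces_connected ?S"
    unfolding induces_connected_def
  proof (intro ballI)
    fix x y assume x: "x \<in> ?S" and y: "y \<in> ?S"
    have "(a,x) \<in> ?Q\<^sup>*" using pth x by (simp add: cls_mem)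
    then have xa: "(x,a) \<in> ?Q\<^sup>*" by (rule rtr_sym_gen[OF symQ])
    have "(a,y) \<in> ?Q\<^sup>*" using pth y by (simp add: cls_mem)
    then show "(x,y) \<in> ?Q\<^sup>*" using xa by (rule rtrancl_trans[rotated])
  qed
  have lab2: "\<forall>x\<in>?S. \<forall>y\<in>?S. label T x = label T y"
  proof (intro ballI)
    fix x y assume "x \<in> ?S" "y \<in> ?S"
    then have "label T x = label T a" "label T y = label T a" using lab by blast+
    then show "label T x = label T y" by simp
  qed
  show ?thesis unfolding same_label_conn_def
  proof (intro conjI)
    show "?S \<noteq> {}" using aS by blast
  qed (fact sub lab2 conn)+
qed

lemma lc_iff: "label_component V E k T S \<longleftrightarrow> (\<exists>a\<in>colorings V E k. S = cls V E k T a)"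
proof
  assume L: "label_component V E k T S"
  then have slc: "same_label_conn V E k T S" and mx: "\<And>S'. S \<subseteq> S' \<Longrightarrow> same_label_conn V E k T S' \<Longrightarrow> S' = S"
    by (auto simp: label_component_def)
  from slc obtain a where aS: "a \<in> S" by (auto simp: same_label_conn_def)
  have aC: "a \<in> colorings V E k" using slc aS by (auto simp: same_label_conn_def)
  have "S \<subseteq> cls V E k T a"
  proof
    fix b assume bS: "b \<in> S"
    have "(a,b) \<in> ({(x, y). col_adj x y} \<inter> S \<times> S)\<^sup>*"
      using slc aS bS by (auto simp: same_label_conn_def induces_connected_def)
    moreover have "{(x, y). col_adj x y} \<inter> S \<times> S \<subseteq> Rel V E k T"
      using slc by (auto simp: same_label_conn_def Rel_def)
    ultimately have "(a,b) \<in> (Rel V E k T)\<^sup>*" using rtrancl_mono by (metis subsetD)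
    then show "b \<in> cls V E k T a" by (simp add: cls_def)
  qed
  then have "cls V E k T a = S" using mx cls_slc[OF aC] by blast
  then show "\<exists>a\<in>colorings V E k. S = cls V E k T a" using aC by auto
next
  assume "\<exists>a\<in>colorings V E k. S = cls V E k T a"
  then obtain a where aC: "a \<in> colorings V E k" and S: "S = cls V E k T a" by auto
  have "S' = S" if "S \<subseteq> S'" "same_label_conn V E k T S'" for S'
  proof
    show "S \<subseteq> S'" by fact
    show "S' \<subseteq> S"
    proof
      fix b assume bS: "b \<in> S'"
      have aS': "a \<in> S'" using that(1) S by (auto simp: cls_def)
      have "(a,b) \<in> ({(x, y). col_adj x y} \<inter> S' \<times> S')\<^sup>*"
        using that(2) aS' bS by (auto simp: same_label_conn_def induces_connected_def)
      moreover have "{(x, y). col_adj x y} \<inter> S' \<times> S' \<subseteq> Rel V E k T"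
        using that(2) by (auto simp: same_label_conn_def Rel_def)
      ultimately have "(a,b) \<in> (Rel V E k T)\<^sup>*" using rtrancl_mono by (metis subsetD)
      then show "b \<in> S" by (simp add: cls_def S)
    qed
  qed
  then show "label_component V E k T S" using cls_slc[OF aC] S by (auto simp: label_component_def)
qed

lemma nodes_eq: "csg_nodes V E k T = cls V E k T ` colorings V E k"
  unfolding csg_nodes_def image_def by (rule set_eqI) (simp only: mem_Collect_eq lc_iff)


lemma cls_eq: "(a,b) \<in> (Rel V E k T)\<^sup>* \<Longrightarrow> cls V E k T a = cls V E k T b"
proof -
  assume r: "(a,b) \<in> (Rel V E k T)\<^sup>*"
  have r': "(b,a) \<in> (Rel V E k T)\<^sup>*" using Rel_rt_sym[OF r] .
  show ?thesis
  proof (rule set_eqI)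
    fix x
    show "x \<in> cls V E k T a \<longleftrightarrow> x \<in> cls V E k T b"
      unfolding cls_def Image_singleton_iff
      using rtrancl_trans[OF r, of x] rtrancl_trans[OF r', of x] by blast
  qed
qed

lemma node_rep: "X \<in> csg_nodes V E k T \<Longrightarrow> g \<in> X \<Longrightarrow> X = cls V E k T g \<and> g \<in> colorings V E k"
proof -
  assume X: "X \<in> csg_nodes V E k T" and g: "g \<in> X"
  then obtain a where a: "a \<in> colorings V E k" "X = cls V E k T a" unfolding nodes_eq by blast
  then have r: "(a,g) \<in> (Rel V E k T)\<^sup>*" using g cls_mem by metis
  show ?thesis using cls_eq[OF r] Rel_col[OF r a(1)] a(2) by simp
qed

lemma cls_label: "a \<in> colorings V E k \<Longrightarrow> csg_label T (cls V E k T a) = label T a"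
proof -
  have "(SOME g. g \<in> cls V E k T a) \<in> cls V E k T a" by (rule someI[of _ a]) (rule cls_self)
  then have "(a, SOME g. g \<in> cls V E k T a) \<in> (Rel V E k T)\<^sup>*" by (simp only: cls_mem)
  then have "label T a = label T (SOME g. g \<in> cls V E k T a)" by (rule Rel_label)
  then show ?thesis unfolding csg_label_def by (rule sym)
qed

lemma node_label: "X \<in> csg_nodes V E k T \<Longrightarrow> g \<in> X \<Longrightarrow> csg_label T X = label T g"
proof -
  assume X: "X \<in> csg_nodes V E k T" and g: "g \<in> X"
  show ?thesis using node_rep[OF X g] cls_label[of g V E k T] by simp
qed

lemma edge_iff: "X \<in> csg_nodes V E k T \<Longrightarrow> Y \<in> csg_nodes V E k T \<Longrightarrow>
   {X,Y} \<in> csg_edges V E k T \<longleftrightarrow> X \<noteq> Y \<and> (\<exists>g\<in>X. \<exists>g'\<in>Y. col_adj g g')"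
proof
  assume "{X,Y} \<in> csg_edges V E k T"
  then have "\<exists>x y. {X,Y} = {x,y} \<and> x \<in> csg_nodes V E k T \<and> y \<in> csg_nodes V E k T \<and> x \<noteq> y \<and>
      (\<exists>g\<in>x. \<exists>g'\<in>y. col_adj g g')" unfolding csg_edges_def by (simp only: mem_Collect_eq)
  then obtain x y where xy: "{X,Y} = {x,y} \<and> x \<in> csg_nodes V E k T \<and> y \<in> csg_nodes V E k T \<and> x \<noteq> y \<and>
      (\<exists>g\<in>x. \<exists>g'\<in>y. col_adj g g')" by (elim exE) (rule that)
  from xy have "(X = x \<and> Y = y) \<or> (X = y \<and> Y = x)" by (simp add: doubleton_eq_iff)
  then show "X \<noteq> Y \<and> (\<exists>g\<in>X. \<exists>g'\<in>Y. col_adj g g')"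
  proof
    assume "X = x \<and> Y = y" then show ?thesis using xy by simp
  next
    assume e: "X = y \<and> Y = x"
    from xy obtain g g' where "g \<in> x" "g' \<in> y" "col_adj g g'" by (elim conjE bexE) (rule that)
    then have "g' \<in> X" "g \<in> Y" "col_adj g' g" using e col_adj_sym[of g g'] by simp_all
    then show ?thesis using e xy by auto
  qed
next
  assume a: "X \<in> csg_nodes V E k T" "Y \<in> csg_nodes V E k T" "X \<noteq> Y \<and> (\<exists>g\<in>X. \<exists>g'\<in>Y. col_adj g g')"
  show "{X,Y} \<in> csg_edges V E k T" unfolding csg_edges_def mem_Collect_eq
    apply (rule exI[of _ X], rule exI[of _ Y])
    using a by simp
qed

lemma same_comp: "X \<in> csg_nodes V E k T \<Longrightarrow> Y \<in> csg_nodes V E k T \<Longrightarrow> g \<in> X \<Longrightarrow> g' \<in> Y \<Longrightarrow>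
   col_adj g g' \<Longrightarrow> label T g = label T g' \<Longrightarrow> X = Y"
proof -
  assume X: "X \<in> csg_nodes V E k T" and Y: "Y \<in> csg_nodes V E k T" and g: "g \<in> X" and g': "g' \<in> Y"
    and a: "col_adj g g'" and l: "label T g = label T g'"
  have "(g,g') \<in> Rel V E k T" using node_rep[OF X g] node_rep[OF Y g'] a l by (auto simp: Rel_def)
  then have "(g,g') \<in> (Rel V E k T)\<^sup>*" by (rule r_into_rtrancl)
  then have "cls V E k T g = cls V E k T g'" by (rule cls_eq)
  then show "X = Y" using node_rep[OF X g] node_rep[OF Y g'] by simp
qed

lemma edge_label: "X \<in> csg_nodes V E k T \<Longrightarrow> Y \<in> csg_nodes V E k T \<Longrightarrow> {X,Y} \<in> csg_edges V E k T \<Longrightarrow>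
   csg_label T X \<noteq> csg_label T Y"
proof
  assume X: "X \<in> csg_nodes V E k T" and Y: "Y \<in> csg_nodes V E k T" and e: "{X,Y} \<in> csg_edges V E k T"
    and l: "csg_label T X = csg_label T Y"
  from edge_iff[OF X Y] e obtain g g' where gg: "X \<noteq> Y" "g \<in> X" "g' \<in> Y" "col_adj g g'" by blast
  have "label T g = label T g'" using node_label[OF X gg(2)] node_label[OF Y gg(3)] l by simp
  then have "X = Y" using same_comp[OF X Y gg(2) gg(3) gg(4)] by simp
  then show False using gg(1) by simp
qed

lemma restr_col: "U \<subseteq> V \<Longrightarrow> g \<in> colorings V E k \<Longrightarrow> restr U g \<in> colorings U (induced E U) k"
  unfolding colorings_def coloring_def restr_def induced_def by auto

lemma label_restr: "T \<subseteq> U \<Longrightarrow> label T (restr U g) = label T g"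
  unfolding label_def restr_def by (auto simp: fun_eq_iff)

lemma diff_restr: "{w. restr U a w \<noteq> restr U b w} = {w. a w \<noteq> b w} \<inter> U"
  unfolding restr_def by auto

lemma col_zero: "g \<in> colorings V E k \<Longrightarrow> v \<notin> V \<Longrightarrow> g v = 0"
  unfolding colorings_def coloring_def by auto

lemma col_range: "g \<in> colorings V E k \<Longrightarrow> v \<in> V \<Longrightarrow> g v \<in> {1..k}"
  unfolding colorings_def coloring_def by auto

lemma label_eqD: "label T a = label T b \<Longrightarrow> v \<in> T \<Longrightarrow> a v = b v"
  unfolding label_def by (metis (full_types))

lemma label_neqD: "label T a \<noteq> label T b \<Longrightarrow> \<exists>v\<in>T. a v \<noteq> b v"
  unfolding label_def by auto

lemma Rel_restr:
  assumes UV: "U \<subseteq> V" and TU: "T \<subseteq> U" and r: "(g,g') \<in> Rel V E k T"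
  shows "(restr U g, restr U g') \<in> (Rel U (induced E U) k T)\<^sup>*"
proof -
  from r have gC: "g \<in> colorings V E k" and gC': "g' \<in> colorings V E k" and a: "col_adj g g'"
    and l: "label T g = label T g'" by (auto simp: Rel_def)
  obtain v where D: "{w. g w \<noteq> g' w} = {v}" using a col_adj_iff by metis
  show ?thesis
  proof (cases "v \<in> U")
    case True
    then have "{w. restr U g w \<noteq> restr U g' w} = {v}" by (simp only: diff_restr D) auto
    then have "col_adj (restr U g) (restr U g')" using col_adj_iff by metis
    then have "(restr U g, restr U g') \<in> Rel U (induced E U) k T"
      using restr_col[OF UV gC] restr_col[OF UV gC'] label_restr[OF TU] l by (simp add: Rel_def)
    then show ?thesis by blast
  next
    case False
    then have "{w. restr U g w \<noteq> restr U g' w} = {}" by (simp only: diff_restr D) auto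
    then have "restr U g = restr U g'" by auto
    then show ?thesis by simp
  qed
qed

lemma Rel_restr_rt:
  assumes UV: "U \<subseteq> V" and TU: "T \<subseteq> U" and r: "(g,g') \<in> (Rel V E k T)\<^sup>*"
  shows "(restr U g, restr U g') \<in> (Rel U (induced E U) k T)\<^sup>*"
  using r
proof (induction rule: rtrancl_induct)
  case base then show ?case by simp
next
  case (step y z)
  have "(restr U y, restr U z) \<in> (Rel U (induced E U) k T)\<^sup>*" using Rel_restr[OF UV TU step(2)] .
  with step(3) show ?case by (rule rtrancl_trans)
qed

locale J =
  fixes V :: "'v set" and E :: "'v set set" and T V1 V2 :: "'v set" and k :: nat
  assumes U: "V1 \<union> V2 = V" and I: "V1 \<inter> V2 = T" and ed: "\<forall>e\<in>E. e \<subseteq> V1 \<or> e \<subseteq> V2"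
    and clq: "is_clique V E T"
begin

abbreviation "C \<equiv> colorings V E k"
abbreviation "C1 \<equiv> colorings V1 (induced E V1) k"
abbreviation "C2 \<equiv> colorings V2 (induced E V2) k"
abbreviation "R \<equiv> Rel V E k T"
abbreviation "R1 \<equiv> Rel V1 (induced E V1) k T"
abbreviation "R2 \<equiv> Rel V2 (induced E V2) k T"
definition glue :: "('v \<Rightarrow> nat) \<Rightarrow> ('v \<Rightarrow> nat) \<Rightarrow> ('v \<Rightarrow> nat)" where
  "glue a b = (\<lambda>v. if v \<in> V1 then a v else b v)"

lemma V1V: "V1 \<subseteq> V" using U by auto
lemma V2V: "V2 \<subseteq> V" using U by auto
lemma TV1: "T \<subseteq> V1" using I by auto
lemma TV2: "T \<subseteq> V2" using I by auto

lemma glue_col: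
  assumes a: "a \<in> C1" and b: "b \<in> C2" and l: "label T a = label T b"
  shows "glue a b \<in> C"
  unfolding colorings_def coloring_def mem_Collect_eq
proof (intro conjI allI impI ballI)
  fix v assume "v \<in> V"
  then show "glue a b v \<in> {1..k}" using col_range[OF a] col_range[OF b] U by (auto simp: glue_def)
next
  fix v assume "v \<notin> V"
  then show "glue a b v = 0" using col_zero[OF b] U by (auto simp: glue_def)
next
  fix u w assume e: "{u,w} \<in> E" "u \<noteq> w"
  show "glue a b u \<noteq> glue a b w"
  proof (cases "{u,w} \<subseteq> V1")
    case True
    then have "{u,w} \<in> induced E V1" using e by (simp add: induced_def)
    then have "a u \<noteq> a w" using a e(2) by (simp add: colorings_def coloring_def)
    then show ?thesis using True by (simp add: glue_def)
  next
    case False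
    then have W: "{u,w} \<subseteq> V2" using ed e by blast
    then have "{u,w} \<in> induced E V2" using e by (simp add: induced_def)
    then have ne: "b u \<noteq> b w" using b e(2) by (simp add: colorings_def coloring_def)
    have "glue a b x = b x" if "x \<in> V2" for x
      using that I label_eqD[OF l] by (auto simp: glue_def)
    then show ?thesis using W ne by auto
  qed
qed

lemma restr1_glue: "a \<in> C1 \<Longrightarrow> restr V1 (glue a b) = a"
  by (rule ext) (simp add: restr_def glue_def col_zero)

lemma restr2_glue: "a \<in> C1 \<Longrightarrow> b \<in> C2 \<Longrightarrow> label T a = label T b \<Longrightarrow> restr V2 (glue a b) = b"
proof (rule ext)
  fix v assume a: "a \<in> C1" and b: "b \<in> C2" and l: "label T a = label T b"
  show "restr V2 (glue a b) v = b v"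
    using col_zero[OF b, of v] label_eqD[OF l, of v] I by (cases "v \<in> V1"; cases "v \<in> V2") (auto simp: restr_def glue_def)
qed

lemma glue_restr: "g \<in> C \<Longrightarrow> glue (restr V1 g) (restr V2 g) = g"
proof (rule ext)
  fix v assume g: "g \<in> C"
  show "glue (restr V1 g) (restr V2 g) v = g v"
    using col_zero[OF g, of v] U by (auto simp: restr_def glue_def)
qed

lemma label_glue: "label T (glue a b) = label T a"
  using TV1 by (auto simp: label_def glue_def fun_eq_iff)

lemma glue_path1:
  assumes p: "(a,a') \<in> R1\<^sup>*" and b: "b \<in> C2" and l: "label T a = label T b"
  shows "(glue a b, glue a' b) \<in> R\<^sup>*"
  using p
proof (induction rule: rtrancl_induct)
  case base then show ?case by simp
next
  case (step y z)
  have yz: "y \<in> C1" "z \<in> C1" "col_adj y z" "label T y = label T z" using step(2) by (auto simp: Rel_def)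
  have ly: "label T y = label T b" using Rel_label[OF step(1)] l by simp
  have "{w. glue y b w \<noteq> glue z b w} = {w. y w \<noteq> z w}"
  proof (rule set_eqI)
    fix w show "w \<in> {w. glue y b w \<noteq> glue z b w} \<longleftrightarrow> w \<in> {w. y w \<noteq> z w}"
      by (cases "w \<in> V1") (auto simp: glue_def col_zero[OF yz(1)] col_zero[OF yz(2)])
  qed
  then have "col_adj (glue y b) (glue z b)" using yz(3) by (simp add: col_adj_def)
  then have "(glue y b, glue z b) \<in> R"
    using glue_col[OF yz(1) b ly] glue_col[OF yz(2) b] ly yz(4) label_glue by (simp add: Rel_def)
  then show ?case using step(3) by (meson rtrancl_into_rtrancl)
qed

lemma glue_path2:
  assumes p: "(b,b') \<in> R2\<^sup>*" and a: "a \<in> C1" and l: "label T a = label T b"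
  shows "(glue a b, glue a b') \<in> R\<^sup>*"
  using p
proof (induction rule: rtrancl_induct)
  case base then show ?case by simp
next
  case (step y z)
  have yz: "y \<in> C2" "z \<in> C2" "col_adj y z" "label T y = label T z" using step(2) by (auto simp: Rel_def)
  have ly: "label T a = label T y" using Rel_label[OF step(1)] l by simp
  obtain v where D: "{w. y w \<noteq> z w} = {v}" using yz(3) col_adj_iff by metis
  have vV2: "v \<in> V2" using D col_zero[OF yz(1)] col_zero[OF yz(2)] by force
  have vT: "v \<notin> T" using D label_eqD[OF yz(4)] by blast
  have vV1: "v \<notin> V1" using vV2 vT I by blast
  have "{w. glue a y w \<noteq> glue a z w} = {w. y w \<noteq> z w} - V1"
    by (auto simp: glue_def)
  also have "\<dots> = {v}" using D vV1 by blast
  finally have "col_adj (glue a y) (glue a z)" using col_adj_iff by metis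
  then have "(glue a y, glue a z) \<in> R"
    using glue_col[OF a yz(1) ly] glue_col[OF a yz(2)] ly yz(4) label_glue by (simp add: Rel_def)
  then show ?case using step(3) by (meson rtrancl_into_rtrancl)
qed

lemma R_iff:
  assumes g: "g \<in> C" and g': "g' \<in> C"
  shows "(g,g') \<in> R\<^sup>* \<longleftrightarrow> (restr V1 g, restr V1 g') \<in> R1\<^sup>* \<and> (restr V2 g, restr V2 g') \<in> R2\<^sup>*"
proof
  assume "(g,g') \<in> R\<^sup>*"
  then show "(restr V1 g, restr V1 g') \<in> R1\<^sup>* \<and> (restr V2 g, restr V2 g') \<in> R2\<^sup>*"
    using Rel_restr_rt V1V V2V TV1 TV2 by blast
next
  assume A: "(restr V1 g, restr V1 g') \<in> R1\<^sup>* \<and> (restr V2 g, restr V2 g') \<in> R2\<^sup>*"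
  have r1: "restr V1 g \<in> C1" "restr V1 g' \<in> C1" using restr_col V1V g g' by blast+
  have r2: "restr V2 g \<in> C2" "restr V2 g' \<in> C2" using restr_col V2V g g' by blast+
  have l1: "label T (restr V1 g) = label T (restr V2 g)" using label_restr TV1 TV2 by metis
  have l2: "label T (restr V1 g') = label T (restr V2 g)"
    using Rel_label A label_restr TV1 TV2 by metis
  have "(glue (restr V1 g) (restr V2 g), glue (restr V1 g') (restr V2 g)) \<in> R\<^sup>*"
    using glue_path1 A r2 l1 by blast
  moreover have "(glue (restr V1 g') (restr V2 g), glue (restr V1 g') (restr V2 g')) \<in> R\<^sup>*"
    using glue_path2 A r1 l2 by blast
  ultimately show "(g,g') \<in> R\<^sup>*" using glue_restr g g' by (metis rtrancl_trans)
qed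

end

lemma (in J) J_swap: "J V E T V2 V1"
  using U I ed clq by unfold_locales auto


context J begin

abbreviation "N \<equiv> csg_nodes V E k T"
abbreviation "N1 \<equiv> csg_nodes V1 (induced E V1) k T"
abbreviation "N2 \<equiv> csg_nodes V2 (induced E V2) k T"
abbreviation "A \<equiv> csg_edges V E k T"
abbreviation "A1 \<equiv> csg_edges V1 (induced E V1) k T"
abbreviation "A2 \<equiv> csg_edges V2 (induced E V2) k T"

lemma label_r1: "label T (restr V1 g) = label T g"
  using label_restr[OF TV1] .

lemma p1_cls:
  assumes g: "g \<in> C"
  shows "restr V1 ` cls V E k T g = cls V1 (induced E V1) k T (restr V1 g)"
proof (rule set_eqI)
  fix x
  have r1g: "restr V1 g \<in> C1" using restr_col[OF V1V g] .
  have r2g: "restr V2 g \<in> C2" using restr_col[OF V2V g] .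
  show "x \<in> restr V1 ` cls V E k T g \<longleftrightarrow> x \<in> cls V1 (induced E V1) k T (restr V1 g)"
  proof
    assume "x \<in> restr V1 ` cls V E k T g"
    then obtain d where d: "d \<in> cls V E k T g" "x = restr V1 d" by blast
    have gd: "(g,d) \<in> R\<^sup>*" using d(1) by (simp only: cls_mem)
    have dC: "d \<in> C" using Rel_col[OF gd g] .
    have "(restr V1 g, restr V1 d) \<in> R1\<^sup>*" using R_iff[OF g dC] gd by simp
    then show "x \<in> cls V1 (induced E V1) k T (restr V1 g)" using d(2) by (simp only: cls_mem)
  next
    assume "x \<in> cls V1 (induced E V1) k T (restr V1 g)"
    then have p: "(restr V1 g, x) \<in> R1\<^sup>*" by (simp only: cls_mem)
    have xC: "x \<in> C1" using Rel_col[OF p r1g] .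
    have lx: "label T x = label T (restr V2 g)"
      using Rel_label[OF p] label_r1 label_restr[OF TV2, of g] by simp
    define d where "d = glue x (restr V2 g)"
    have dC: "d \<in> C" unfolding d_def using glue_col[OF xC r2g lx] .
    have d1: "restr V1 d = x" unfolding d_def using restr1_glue[OF xC] .
    have d2: "restr V2 d = restr V2 g" unfolding d_def using restr2_glue[OF xC r2g lx] .
    have "(g,d) \<in> R\<^sup>*" using R_iff[OF g dC] d1 d2 p by simp
    then have "d \<in> cls V E k T g" by (simp only: cls_mem)
    then show "x \<in> restr V1 ` cls V E k T g" using d1 by (metis imageI)
  qed
qed

lemma joint:
  assumes g: "g \<in> C" and d: "d \<in> C"
    and e1: "cls V1 (induced E V1) k T (restr V1 g) = cls V1 (induced E V1) k T (restr V1 d)"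
    and e2: "cls V2 (induced E V2) k T (restr V2 g) = cls V2 (induced E V2) k T (restr V2 d)"
  shows "cls V E k T g = cls V E k T d"
proof -
  have "restr V1 d \<in> cls V1 (induced E V1) k T (restr V1 g)" using cls_self[of "restr V1 d"] e1 by simp
  then have p1: "(restr V1 g, restr V1 d) \<in> R1\<^sup>*" by (simp only: cls_mem)
  have "restr V2 d \<in> cls V2 (induced E V2) k T (restr V2 g)" using cls_self[of "restr V2 d"] e2 by simp
  then have p2: "(restr V2 g, restr V2 d) \<in> R2\<^sup>*" by (simp only: cls_mem)
  have "(g,d) \<in> R\<^sup>*" using R_iff[OF g d] p1 p2 by simp
  then show ?thesis by (rule cls_eq)
qed

lemma node_obtain:
  assumes "X \<in> N" obtains g where "g \<in> C" "X = cls V E k T g"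
  using assms unfolding nodes_eq by blast

lemma p1_node: "X \<in> N \<Longrightarrow> restr V1 ` X \<in> N1"
proof -
  assume X: "X \<in> N"
  then obtain g where g: "g \<in> C" "X = cls V E k T g" by (rule node_obtain)
  have "restr V1 g \<in> C1" using restr_col[OF V1V g(1)] .
  then show ?thesis unfolding nodes_eq g(2) p1_cls[OF g(1)] by (rule imageI)
qed

lemma p1_label: "X \<in> N \<Longrightarrow> csg_label T (restr V1 ` X) = csg_label T X"
proof -
  assume X: "X \<in> N"
  then obtain g where g: "g \<in> C" "X = cls V E k T g" by (rule node_obtain)
  have r: "restr V1 g \<in> C1" using restr_col[OF V1V g(1)] .
  show ?thesis unfolding g(2) p1_cls[OF g(1)] cls_label[OF r] cls_label[OF g(1)] label_r1 ..
qed

lemma edge_diff_T: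
  assumes X: "X \<in> N" and Y: "Y \<in> N" and g: "g \<in> X" and g': "g' \<in> Y"
    and D: "{w. g w \<noteq> g' w} = {v}" and ne: "X \<noteq> Y"
  shows "v \<in> T"
proof (rule ccontr)
  assume v: "v \<notin> T"
  have "label T g = label T g'"
  proof (rule ext)
    fix w show "label T g w = label T g' w"
    proof (cases "w = v")
      case True then show ?thesis using v by (simp add: label_def)
    next
      case False
      then have "w \<notin> {w. g w \<noteq> g' w}" unfolding D by simp
      then show ?thesis by (simp add: label_def)
    qed
  qed
  moreover have "col_adj g g'" using D col_adj_iff by metis
  ultimately have "X = Y" using same_comp[OF X Y g g'] by simp
  then show False using ne by simp
qed

lemma p1_edge:
  assumes X: "X \<in> N" and Y: "Y \<in> N" and e: "{X,Y} \<in> A"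
  shows "{restr V1 ` X, restr V1 ` Y} \<in> A1"
proof -
  have ex: "X \<noteq> Y \<and> (\<exists>g\<in>X. \<exists>g'\<in>Y. col_adj g g')" by (rule edge_iff[OF X Y, THEN iffD1, OF e])
  then have XY: "X \<noteq> Y" by (rule conjunct1)
  from ex obtain g g' where gg: "g \<in> X" "g' \<in> Y" "col_adj g g'" by (elim conjE bexE) (rule that)
  obtain v where D: "{w. g w \<noteq> g' w} = {v}" using gg(3) unfolding col_adj_iff by (elim exE) (rule that)
  have vT: "v \<in> T" using edge_diff_T[OF X Y gg(1) gg(2) D XY] .
  then have vV1: "v \<in> V1" using TV1 by blast
  have "{w. restr V1 g w \<noteq> restr V1 g' w} = {v}" unfolding diff_restr D using vV1 by simp
  then have adj: "col_adj (restr V1 g) (restr V1 g')" unfolding col_adj_iff by (rule exI)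
  have ne: "restr V1 ` X \<noteq> restr V1 ` Y"
  proof
    assume "restr V1 ` X = restr V1 ` Y"
    then have "csg_label T X = csg_label T Y" using p1_label[OF X] p1_label[OF Y] by simp
    then show False using edge_label[OF X Y e] by simp
  qed
  have m: "restr V1 g \<in> restr V1 ` X" "restr V1 g' \<in> restr V1 ` Y" using imageI[OF gg(1)] imageI[OF gg(2)] by simp_all
  show ?thesis unfolding edge_iff[OF p1_node[OF X] p1_node[OF Y]]
    using ne adj m by (intro conjI bexI[of _ "restr V1 g"] bexI[of _ "restr V1 g'"]) simp_all
qed

lemma inj_G:
  assumes i1: "injective_nbh N1 A1 (csg_label T)" and i2: "injective_nbh N2 A2 (csg_label T)"
  shows "injective_nbh N A (csg_label T)"
  unfolding injective_nbh_def
proof (intro ballI impI notI)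
  fix x y z assume x: "x \<in> N" and y: "y \<in> N" and z: "z \<in> N"
    and c: "{x, y} \<in> A \<and> {x, z} \<in> A \<and> y \<noteq> x \<and> z \<noteq> x \<and> y \<noteq> z"
    and l: "csg_label T y = csg_label T z"
  interpret swap: J V E T V2 V1 k by (rule J_swap)
  have e1: "{restr V1 ` x, restr V1 ` y} \<in> A1" "{restr V1 ` x, restr V1 ` z} \<in> A1"
    using p1_edge[OF x y] p1_edge[OF x z] c by simp_all
  have "restr V1 ` x \<noteq> restr V1 ` y" using e1(1) edge_iff[OF p1_node[OF x] p1_node[OF y]] by simp
  then have ny1: "restr V1 ` y \<noteq> restr V1 ` x" by (rule not_sym)
  have "restr V1 ` x \<noteq> restr V1 ` z" using e1(2) edge_iff[OF p1_node[OF x] p1_node[OF z]] by simp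
  then have nz1: "restr V1 ` z \<noteq> restr V1 ` x" by (rule not_sym)
  have l1: "csg_label T (restr V1 ` y) = csg_label T (restr V1 ` z)" using p1_label[OF y] p1_label[OF z] l by simp
  have eq1: "restr V1 ` y = restr V1 ` z"
  proof (rule ccontr)
    assume ne: "restr V1 ` y \<noteq> restr V1 ` z"
    have "csg_label T (restr V1 ` y) \<noteq> csg_label T (restr V1 ` z)"
      using i1[unfolded injective_nbh_def, rule_format, OF p1_node[OF x] p1_node[OF y] p1_node[OF z]] e1 ny1 nz1 ne
      by simp
    with l1 show False by simp
  qed
  have e2: "{restr V2 ` x, restr V2 ` y} \<in> A2" "{restr V2 ` x, restr V2 ` z} \<in> A2"
    using swap.p1_edge[OF x y] swap.p1_edge[OF x z] c by simp_all
  have "restr V2 ` x \<noteq> restr V2 ` y" using e2(1) edge_iff[OF swap.p1_node[OF x] swap.p1_node[OF y]] by simp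
  then have ny2: "restr V2 ` y \<noteq> restr V2 ` x" by (rule not_sym)
  have "restr V2 ` x \<noteq> restr V2 ` z" using e2(2) edge_iff[OF swap.p1_node[OF x] swap.p1_node[OF z]] by simp
  then have nz2: "restr V2 ` z \<noteq> restr V2 ` x" by (rule not_sym)
  have l2: "csg_label T (restr V2 ` y) = csg_label T (restr V2 ` z)" using swap.p1_label[OF y] swap.p1_label[OF z] l by simp
  have eq2: "restr V2 ` y = restr V2 ` z"
  proof (rule ccontr)
    assume ne: "restr V2 ` y \<noteq> restr V2 ` z"
    have "csg_label T (restr V2 ` y) \<noteq> csg_label T (restr V2 ` z)"
      using i2[unfolded injective_nbh_def, rule_format, OF swap.p1_node[OF x] swap.p1_node[OF y] swap.p1_node[OF z]] e2 ny2 nz2 ne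
      by simp
    with l2 show False by simp
  qed
  obtain g where g: "g \<in> C" "y = cls V E k T g" using y by (rule node_obtain)
  obtain d where d: "d \<in> C" "z = cls V E k T d" using z by (rule node_obtain)
  have "cls V E k T g = cls V E k T d"
    apply (rule joint[OF g(1) d(1)])
    using eq1 eq2 p1_cls[OF g(1)] p1_cls[OF d(1)] swap.p1_cls[OF g(1)] swap.p1_cls[OF d(1)] g(2) d(2) by simp_all
  then show False using c g(2) d(2) by simp
qed

end

lemma mod_facts:
  assumes i: "i < (n::nat)" and n: "3 \<le> n"
  shows "Suc i mod n \<noteq> i" "Suc (Suc i) mod n \<noteq> i" "Suc (Suc i) mod n \<noteq> Suc i mod n"
    "Suc (Suc i mod n) mod n = Suc (Suc i) mod n" "Suc i mod n < n" "Suc (Suc i) mod n < n"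
proof -
  have c: "Suc (Suc i) < n \<or> Suc (Suc i) = n \<or> Suc i = n" using i by linarith
  have "Suc i mod n \<noteq> i \<and> Suc (Suc i) mod n \<noteq> i \<and> Suc (Suc i) mod n \<noteq> Suc i mod n"
  proof (rule disjE[OF c])
    assume "Suc (Suc i) < n" then show ?thesis by simp
  next
    assume "Suc (Suc i) = n \<or> Suc i = n"
    then show ?thesis
    proof
      assume h: "Suc (Suc i) = n"
      then have "Suc i < n" by simp
      then show ?thesis using h n by simp
    next
      assume h: "Suc i = n"
      then have "Suc (Suc i) mod n = Suc n mod n" by simp
      also have "\<dots> = 1" using n by (simp add: mod_Suc)
      finally show ?thesis using h n by simp
    qed
  qed
  then show "Suc i mod n \<noteq> i" "Suc (Suc i) mod n \<noteq> i" "Suc (Suc i) mod n \<noteq> Suc i mod n" by simp_all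
  show "Suc (Suc i mod n) mod n = Suc (Suc i) mod n" by (simp add: mod_Suc_eq)
  show "Suc i mod n < n" "Suc (Suc i) mod n < n" using i by simp_all
qed

lemma walk_cycle:
  fixes w :: "'n list"
  assumes n: "length w \<ge> 3" and sub: "set w \<subseteq> N"
   and ed: "\<And>i. i < length w \<Longrightarrow> {w!i, w!(Suc i mod length w)} \<in> A \<and> w!i \<noteq> w!(Suc i mod length w)"
   and nb: "\<And>i. i < length w \<Longrightarrow> w!i \<noteq> w!(Suc (Suc i) mod length w)"
  shows "has_cycle N A"
proof (cases "distinct w")
  case True
  show ?thesis unfolding has_cycle_def using True n sub ed by blast
next
  case False
  define n where "n = length w"
  define P where "P d \<longleftrightarrow> (\<exists>i j. i < j \<and> j < n \<and> j - i = d \<and> w!i = w!j)" for d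
  obtain a b where ab: "a < n" "b < n" "a \<noteq> b" "w!a = w!b" using False unfolding distinct_conv_nth n_def by blast
  have "P (if a < b then b - a else a - b)"
  proof (cases "a < b")
    case True then show ?thesis unfolding P_def using ab by auto
  next
    case False then show ?thesis unfolding P_def using ab by (intro exI[of _ b] exI[of _ a]) auto
  qed
  then have Pd: "P (LEAST d. P d)" by (rule LeastI)
  define d where "d = (LEAST d. P d)"
  have mn: "\<not> P e" if "e < d" for e using not_less_Least[of e P] that unfolding d_def by blast
  from Pd obtain i j where ij: "i < j" "j < n" "j - i = d" "w!i = w!j" unfolding P_def d_def by blast
  have jd: "j = i + d" using ij by simp
  define cs where "cs = map (\<lambda>a. w!(i+a)) [0..<d]"
  have len: "length cs = d" by (simp add: cs_def)
  have csn: "cs!a = w!(i+a)" if "a < d" for a using that by (simp add: cs_def)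
  have d1: "d \<noteq> 1"
  proof
    assume "d = 1"
    then have "Suc i mod n = Suc i" "Suc i = j" using ij jd by simp_all
    then show False using ed[of i] ij n_def by simp
  qed
  have d2: "d \<noteq> 2"
  proof
    assume "d = 2"
    then have "Suc (Suc i) mod n = Suc (Suc i)" "Suc (Suc i) = j" using ij jd by simp_all
    then show False using nb[of i] ij n_def by simp
  qed
  have d3: "3 \<le> d" using d1 d2 ij by linarith
  have dist: "distinct cs"
    unfolding distinct_conv_nth len
  proof (intro allI impI)
    fix a b assume a: "a < d" and b: "b < d" and ne: "a \<noteq> b"
    show "cs!a \<noteq> cs!b"
    proof
      assume eq: "cs!a = cs!b"
      then have weq: "w!(i+a) = w!(i+b)" using csn a b by simp
      show False
      proof (cases "a < b")
        case True
        have "P (b - a)" unfolding P_def using True b jd ij weq by (intro exI[of _ "i+a"] exI[of _ "i+b"]) auto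
        then show False using mn[of "b-a"] True b by simp
      next
        case False
        then have "b < a" using ne by simp
        have "P (a - b)" unfolding P_def using \<open>b < a\<close> a jd ij weq by (intro exI[of _ "i+b"] exI[of _ "i+a"]) auto
        then show False using mn[of "a-b"] \<open>b < a\<close> a by simp
      qed
    qed
  qed
  have setcs: "set cs \<subseteq> N"
  proof
    fix x assume "x \<in> set cs"
    then obtain a where "a < d" "x = w!(i+a)" by (auto simp: cs_def)
    then have "i + a < length w" using ij jd n_def by simp
    then show "x \<in> N" using sub \<open>x = w!(i+a)\<close> nth_mem by blast
  qed
  have edges: "{cs!a, cs!(Suc a mod length cs)} \<in> A" if a: "a < length cs" for a
  proof (cases "Suc a < d")
    case True
    have "i + a < length w" "Suc (i+a) mod length w = Suc (i+a)" using True ij jd n_def by simp_all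
    then have "{w!(i+a), w!(Suc (i+a))} \<in> A" using ed[of "i+a"] by simp
    then show ?thesis using True csn[of a] csn[of "Suc a"] len by simp
  next
    case False
    then have sa: "Suc a = d" using a len by simp
    have "i + a < length w" "Suc (i+a) mod length w = j" using sa ij jd n_def by simp_all
    then have "{w!(i+a), w!j} \<in> A" using ed[of "i+a"] by simp
    moreover have "cs!(Suc a mod length cs) = w!j" using sa len csn[of 0] ij d3 by simp
    ultimately show ?thesis using csn[of a] sa by simp
  qed
  show ?thesis unfolding has_cycle_def using len d3 dist setcs edges by blast
qed

lemma diff_label: "{w. a w \<noteq> b w} = {v} \<Longrightarrow> v \<notin> T \<Longrightarrow> label T a = label T b"
proof (rule ext)
  fix w assume D: "{w. a w \<noteq> b w} = {v}" and v: "v \<notin> T"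
  show "label T a w = label T b w"
  proof (cases "w = v")
    case True then show ?thesis using v by (simp add: label_def)
  next
    case False
    then have "w \<notin> {w. a w \<noteq> b w}" unfolding D by simp
    then show ?thesis by (simp add: label_def)
  qed
qed

lemma label_coloring:
  assumes a: "a \<in> colorings U (induced E U) k" and TU: "T \<subseteq> U" and cl: "is_clique V E T"
  shows "coloring T (complete_edges T) k (label T a)"
  unfolding coloring_def
proof (intro conjI allI impI ballI)
  fix v assume "v \<in> T" then show "label T a v \<in> {1..k}" using col_range[OF a] TU by (auto simp: label_def)
next
  fix v assume "v \<notin> T" then show "label T a v = 0" by (simp add: label_def)
next
  fix u w assume e: "{u,w} \<in> complete_edges T" and ne: "u \<noteq> w"
  from e obtain p q where pq: "{u,w} = {p,q}" "p \<in> T" "q \<in> T" unfolding complete_edges_def by blast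
  have uw: "u \<in> T" "w \<in> T" using pq by (auto simp: doubleton_eq_iff)
  have "{u,w} \<in> E" using cl uw ne by (simp add: is_clique_def)
  then have "{u,w} \<in> induced E U" using uw TU by (auto simp: induced_def)
  then have "a u \<noteq> a w" using a ne by (simp add: colorings_def coloring_def)
  then show "label T a u \<noteq> label T a w" using uw by (simp add: label_def)
qed

context J begin

lemma iso1:
  assumes cc: "color_complete m k N1 A1 (csg_label T)" and col: "C \<noteq> {}"
  shows "labeled_iso N A (csg_label T) N2 A2 (csg_label T)"
proof -
  interpret swap: J V E T V2 V1 k by (rule J_swap)
  from cc obtain T' where cl: "\<forall>x\<in>N1. coloring T' (complete_edges T') k (csg_label T x)"
    and un: "\<forall>c. coloring T' (complete_edges T') k c \<longrightarrow> (\<exists>!x. x \<in> N1 \<and> csg_label T x = c)"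
    and ae: "\<forall>x\<in>N1. \<forall>y\<in>N1. {x, y} \<in> A1 \<longleftrightarrow> card {v \<in> T'. csg_label T x v \<noteq> csg_label T y v} = 1"
    unfolding color_complete_def by blast
  from col obtain g0 where g0: "g0 \<in> C" by blast
  have a0: "restr V1 g0 \<in> C1" using restr_col[OF V1V g0] .
  have x0: "cls V1 (induced E V1) k T (restr V1 g0) \<in> N1" unfolding nodes_eq using a0 by (rule imageI)
  have c0: "coloring T' (complete_edges T') k (label T (restr V1 g0))"
    using cl[rule_format, OF x0] cls_label[OF a0] by simp
  have TT: "T' = T"
  proof (rule set_eqI)
    fix v
    show "v \<in> T' \<longleftrightarrow> v \<in> T"
    proof
      assume v: "v \<in> T'"
      then have "label T (restr V1 g0) v \<in> {1..k}" using c0 by (simp add: coloring_def)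
      then show "v \<in> T" by (cases "v \<in> T") (simp_all add: label_def)
    next
      assume v: "v \<in> T"
      then have "label T (restr V1 g0) v \<in> {1..k}" using col_range[OF a0] TV1 by (auto simp: label_def)
      then show "v \<in> T'" using c0 by (cases "v \<in> T'") (simp_all add: coloring_def)
    qed
  qed
  have uniq: "x = y" if "x \<in> N1" "y \<in> N1" "csg_label T x = csg_label T y" for x y
  proof -
    have "coloring T' (complete_edges T') k (csg_label T x)" using cl that(1) by blast
    then have "\<exists>!z. z \<in> N1 \<and> csg_label T z = csg_label T x" using un by blast
    then obtain z where z: "\<forall>y. y \<in> N1 \<and> csg_label T y = csg_label T x \<longrightarrow> y = z" unfolding Ex1_def by blast
    have "x = z" using z that by blast
    moreover have "y = z" using z that by simp
    ultimately show ?thesis by simp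
  qed
  have exi: "\<exists>a\<in>C1. label T a = label T b" if b: "b \<in> C2" for b
  proof -
    have "coloring T' (complete_edges T') k (label T b)" using label_coloring[OF b TV2 clq] TT by simp
    then obtain x where x: "x \<in> N1" "csg_label T x = label T b" using un by blast
    from x(1) obtain a where a: "a \<in> C1" "x = cls V1 (induced E V1) k T a" unfolding nodes_eq by blast
    have "label T a = label T b" using a x cls_label[OF a(1)] by simp
    then show ?thesis using a(1) by blast
  qed
  define f where "f = (\<lambda>X. restr V2 ` X)"
  have fN: "f X \<in> N2" if "X \<in> N" for X unfolding f_def using swap.p1_node[OF that] .
  have fl: "csg_label T (f X) = csg_label T X" if "X \<in> N" for X unfolding f_def using swap.p1_label[OF that] .
  have inj: "inj_on f N"
  proof (rule inj_onI)
    fix X Y assume X: "X \<in> N" and Y: "Y \<in> N" and e: "f X = f Y"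
    obtain g where g: "g \<in> C" "X = cls V E k T g" using X by (rule node_obtain)
    obtain d where d: "d \<in> C" "Y = cls V E k T d" using Y by (rule node_obtain)
    have lgd: "label T g = label T d" using fl[OF X] fl[OF Y] e cls_label[OF g(1)] cls_label[OF d(1)] g(2) d(2) by simp
    have r1g: "restr V1 g \<in> C1" using restr_col[OF V1V g(1)] .
    have r1d: "restr V1 d \<in> C1" using restr_col[OF V1V d(1)] .
    have n1: "cls V1 (induced E V1) k T (restr V1 g) \<in> N1" "cls V1 (induced E V1) k T (restr V1 d) \<in> N1"
      unfolding nodes_eq using imageI[OF r1g] imageI[OF r1d] by simp_all
    have "cls V1 (induced E V1) k T (restr V1 g) = cls V1 (induced E V1) k T (restr V1 d)"
      using uniq[OF n1] cls_label[OF r1g] cls_label[OF r1d] label_r1 lgd by simp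
    moreover have "cls V2 (induced E V2) k T (restr V2 g) = cls V2 (induced E V2) k T (restr V2 d)"
      using e swap.p1_cls[OF g(1)] swap.p1_cls[OF d(1)] g(2) d(2) unfolding f_def by simp
    ultimately show "X = Y" using joint[OF g(1) d(1)] g(2) d(2) by simp
  qed
  have img: "f ` N = N2"
  proof
    show "f ` N \<subseteq> N2" using fN by blast
    show "N2 \<subseteq> f ` N"
    proof
      fix Z assume Z: "Z \<in> N2"
      then obtain b where b: "b \<in> C2" "Z = cls V2 (induced E V2) k T b" unfolding nodes_eq by blast
      obtain a where a: "a \<in> C1" "label T a = label T b" using exi[OF b(1)] by blast
      have gC: "glue a b \<in> C" using glue_col[OF a(1) b(1) a(2)] .
      have "f (cls V E k T (glue a b)) = Z"
        unfolding f_def swap.p1_cls[OF gC] restr2_glue[OF a(1) b(1) a(2)] b(2) ..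
      moreover have "cls V E k T (glue a b) \<in> N" unfolding nodes_eq using gC by (rule imageI)
      ultimately show "Z \<in> f ` N" by blast
    qed
  qed
  have edges: "{X,Y} \<in> A \<longleftrightarrow> {f X, f Y} \<in> A2" if X: "X \<in> N" and Y: "Y \<in> N" for X Y
  proof
    assume "{X,Y} \<in> A" then show "{f X, f Y} \<in> A2" unfolding f_def by (rule swap.p1_edge[OF X Y])
  next
    assume e2: "{f X, f Y} \<in> A2"
    have ex: "f X \<noteq> f Y \<and> (\<exists>g\<in>f X. \<exists>g'\<in>f Y. col_adj g g')" by (rule edge_iff[OF fN[OF X] fN[OF Y], THEN iffD1, OF e2])
    then have fne: "f X \<noteq> f Y" by (rule conjunct1)
    from ex obtain b b' where bb: "b \<in> f X" "b' \<in> f Y" "col_adj b b'" by (elim conjE bexE) (rule that)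
    from bb(1) obtain g where g: "g \<in> X" "b = restr V2 g" unfolding f_def by blast
    from bb(2) obtain g' where g': "g' \<in> Y" "b' = restr V2 g'" unfolding f_def by blast
    have gC: "g \<in> C" "X = cls V E k T g" using node_rep[OF X g(1)] by simp_all
    have gC': "g' \<in> C" "Y = cls V E k T g'" using node_rep[OF Y g'(1)] by simp_all
    have bC: "b \<in> C2" "b' \<in> C2" using restr_col[OF V2V gC(1)] restr_col[OF V2V gC'(1)] g(2) g'(2) by simp_all
    obtain v where D: "{w. b w \<noteq> b' w} = {v}" using bb(3) unfolding col_adj_iff by (elim exE) (rule that)
    have vT: "v \<in> T"
    proof (rule ccontr)
      assume "v \<notin> T"
      then have "label T b = label T b'" using diff_label[OF D] by simp
      then have "f X = f Y" using same_comp[OF fN[OF X] fN[OF Y] bb(1) bb(2) bb(3)] by simp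
      then show False using fne by simp
    qed
    have bv: "b w \<noteq> b' w \<longleftrightarrow> w = v" for w
    proof -
      have "b w \<noteq> b' w \<longleftrightarrow> w \<in> {w. b w \<noteq> b' w}" by simp
      then show ?thesis unfolding D by simp
    qed
    define a where "a = restr V1 g"
    define a' where "a' = restr V1 g'"
    have aC: "a \<in> C1" "a' \<in> C1" unfolding a_def a'_def using restr_col[OF V1V gC(1)] restr_col[OF V1V gC'(1)] by simp_all
    have la: "label T a = label T b" "label T a' = label T b'"
      unfolding a_def a'_def g(2) g'(2) label_r1 swap.label_r1 by simp_all
    define x where "x = cls V1 (induced E V1) k T a"
    define y where "y = cls V1 (induced E V1) k T a'"
    have xy: "x \<in> N1" "y \<in> N1" unfolding x_def y_def nodes_eq using imageI[OF aC(1)] imageI[OF aC(2)] by simp_all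
    have lx: "csg_label T x = label T b" "csg_label T y = label T b'"
      unfolding x_def y_def using cls_label[OF aC(1)] cls_label[OF aC(2)] la by simp_all
    have "{w \<in> T'. csg_label T x w \<noteq> csg_label T y w} = {v}"
    proof (rule set_eqI)
      fix w show "w \<in> {w \<in> T'. csg_label T x w \<noteq> csg_label T y w} \<longleftrightarrow> w \<in> {v}"
        unfolding TT lx using vT bv[of w] by (cases "w \<in> T") (auto simp add: label_def)
    qed
    then have "{x,y} \<in> A1" using ae xy by simp
    then have ex1: "x \<noteq> y \<and> (\<exists>g\<in>x. \<exists>g'\<in>y. col_adj g g')" by (rule edge_iff[OF xy, THEN iffD1])
    from ex1 obtain al al' where al: "al \<in> x" "al' \<in> y" "col_adj al al'" by (elim conjE bexE) (rule that)
    have pa: "(a, al) \<in> R1\<^sup>*" "(a', al') \<in> R1\<^sup>*" using al(1,2) unfolding x_def y_def cls_mem by simp_all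
    have alC: "al \<in> C1" "al' \<in> C1" using Rel_col[OF pa(1) aC(1)] Rel_col[OF pa(2) aC(2)] by simp_all
    have lal: "label T al = label T b" "label T al' = label T b'" using Rel_label[OF pa(1)] Rel_label[OF pa(2)] la by simp_all
    obtain u where Du: "{w. al w \<noteq> al' w} = {u}" using al(3) unfolding col_adj_iff by (elim exE) (rule that)
    have "label T al v = al v" "label T al' v = al' v" "label T b v = b v" "label T b' v = b' v"
      using vT by (simp_all add: label_def)
    then have "al v \<noteq> al' v" using lal bv[of v] by simp
    then have "v \<in> {w. al w \<noteq> al' w}" by simp
    then have uv: "u = v" unfolding Du by simp
    have alv: "al w \<noteq> al' w \<longleftrightarrow> w = v" for w
    proof -
      have "al w \<noteq> al' w \<longleftrightarrow> w \<in> {w. al w \<noteq> al' w}" by simp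
      then show ?thesis unfolding Du uv by simp
    qed
    define dl where "dl = glue al b"
    define dl' where "dl' = glue al' b'"
    have dC: "dl \<in> C" "dl' \<in> C" unfolding dl_def dl'_def using glue_col[OF alC(1) bC(1) lal(1)] glue_col[OF alC(2) bC(2) lal(2)] by simp_all
    have "{w. dl w \<noteq> dl' w} = {v}"
    proof (rule set_eqI)
      fix w show "w \<in> {w. dl w \<noteq> dl' w} \<longleftrightarrow> w \<in> {v}"
        using alv[of w] bv[of w] vT TV1 unfolding dl_def dl'_def glue_def by (cases "w \<in> V1") auto
    qed
    then have adj: "col_adj dl dl'" unfolding col_adj_iff by (rule exI)
    have h1: "restr V1 dl = al" "restr V2 dl = b" unfolding dl_def
      using restr1_glue[OF alC(1)] restr2_glue[OF alC(1) bC(1) lal(1)] by simp_all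
    have "(g, dl) \<in> R\<^sup>*"
      using R_iff[OF gC(1) dC(1)] pa(1) h1 g(2) unfolding a_def by simp
    then have dX: "dl \<in> X" unfolding gC(2) cls_mem .
    have h2: "restr V1 dl' = al'" "restr V2 dl' = b'" unfolding dl'_def
      using restr1_glue[OF alC(2)] restr2_glue[OF alC(2) bC(2) lal(2)] by simp_all
    have "(g', dl') \<in> R\<^sup>*"
      using R_iff[OF gC'(1) dC(2)] pa(2) h2 g'(2) unfolding a'_def by simp
    then have dY: "dl' \<in> Y" unfolding gC'(2) cls_mem .
    have XY: "X \<noteq> Y"
    proof
      assume "X = Y" then show False using fne by simp
    qed
    show "{X,Y} \<in> A" unfolding edge_iff[OF X Y]
      using XY dX dY adj by (intro conjI bexI[of _ dl] bexI[of _ dl']) simp_all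
  qed
  show ?thesis unfolding labeled_iso_def
  proof (intro exI[of _ f] conjI ballI)
    show "bij_betw f N N2" unfolding bij_betw_def using inj img by simp
  next
    fix X Y assume "X \<in> N" "Y \<in> N" then show "{X,Y} \<in> A \<longleftrightarrow> {f X, f Y} \<in> A2" by (rule edges)
  next
    fix X assume "X \<in> N" then show "csg_label T (f X) = csg_label T X" by (rule fl)
  qed
qed

end

context J begin

lemma forest_G:
  assumes f1: "forest N1 A1" and i1: "injective_nbh N1 A1 (csg_label T)"
    and i2: "injective_nbh N2 A2 (csg_label T)"
  shows "forest N A"
  unfolding forest_def
proof
  assume "has_cycle N A"
  then obtain cs where cs: "length cs \<ge> 3" "distinct cs" "set cs \<subseteq> N"
    "\<forall>i < length cs. {cs ! i, cs ! (Suc i mod length cs)} \<in> A" unfolding has_cycle_def by blast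
  define n where "n = length cs"
  define w where "w = map (\<lambda>X. restr V1 ` X) cs"
  have iG: "injective_nbh N A (csg_label T)" using inj_G[OF i1 i2] .
  have lw: "length w = n" by (simp add: w_def n_def)
  have n3: "3 \<le> n" using cs(1) n_def by simp
  have csN: "cs!i \<in> N" if "i < n" for i using cs(3) that n_def nth_mem by blast
  have wi: "w!i = restr V1 ` (cs!i)" if "i < n" for i using that by (simp add: w_def n_def)
  have ce: "{cs!i, cs!(Suc i mod n)} \<in> A" if "i < n" for i using cs(4) that n_def by simp
  have "has_cycle N1 A1"
  proof (rule walk_cycle[of w])
    show "3 \<le> length w" using lw n3 by simp
    show "set w \<subseteq> N1" unfolding w_def using p1_node cs(3) by auto
  next
    fix i assume i: "i < length w"
    then have i': "i < n" using lw by simp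
    have j: "Suc i mod n < n" using mod_facts[OF i' n3] by simp
    have e: "{w!i, w!(Suc i mod n)} \<in> A1" using p1_edge[OF csN[OF i'] csN[OF j] ce[OF i']] wi[OF i'] wi[OF j] by simp
    have "w!i \<noteq> w!(Suc i mod n)" using e edge_iff[OF p1_node[OF csN[OF i']] p1_node[OF csN[OF j]]] wi[OF i'] wi[OF j] by simp
    then show "{w!i, w!(Suc i mod length w)} \<in> A1 \<and> w!i \<noteq> w!(Suc i mod length w)" using e lw by simp
  next
    fix i assume i: "i < length w"
    then have i': "i < n" using lw by simp
    define j where "j = Suc i mod n"
    define l where "l = Suc (Suc i) mod n"
    have j: "j < n" "j \<noteq> i" using mod_facts[OF i' n3] unfolding j_def by simp_all
    have l: "l < n" "l \<noteq> i" "l \<noteq> j" "Suc j mod n = l" using mod_facts[OF i' n3] unfolding j_def l_def by simp_all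
    have dn: "cs!a \<noteq> cs!b" if "a < n" "b < n" "a \<noteq> b" for a b
      using cs(2) that n_def nth_eq_iff_index_eq by blast
    have e1: "{cs!j, cs!i} \<in> A" using ce[OF i'] unfolding j_def by (simp add: insert_commute)
    have e2: "{cs!j, cs!l} \<in> A" using ce[OF j(1)] l(4) by simp
    have "csg_label T (cs!i) \<noteq> csg_label T (cs!l)"
      using iG[unfolded injective_nbh_def, rule_format, OF csN[OF j(1)] csN[OF i'] csN[OF l(1)]]
        e1 e2 dn[OF i' j(1) j(2)[symmetric]] dn[OF l(1) j(1) l(3)] dn[OF i' l(1) l(2)[symmetric]] by simp
    then have "restr V1 ` (cs!i) \<noteq> restr V1 ` (cs!l)" using p1_label[OF csN[OF i']] p1_label[OF csN[OF l(1)]] by metis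
    then show "w!i \<noteq> w!(Suc (Suc i) mod length w)" using wi[OF i'] wi[OF l(1)] lw unfolding l_def by simp
  qed
  then show False using f1 unfolding forest_def by simp
qed

end

theorem lemma9:
  fixes V V1 V2 T :: "'v set" and E :: "'v set set" and k m :: nat
  assumes "graph V E"
    and "colorable V E k"
    and "chordal V E"
    and "is_clique V E T"
    and "is_join V E T V1 V2"
  shows "(color_complete m k (csg_nodes V1 (induced E V1) k T) (csg_edges V1 (induced E V1) k T)
              (csg_label T)
            \<longrightarrow> labeled_iso (csg_nodes V E k T) (csg_edges V E k T) (csg_label T)
                  (csg_nodes V2 (induced E V2) k T) (csg_edges V2 (induced E V2) k T) (csg_label T))
       \<and> (color_complete m k (csg_nodes V2 (induced E V2) k T) (csg_edges V2 (induced E V2) k T)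
              (csg_label T)
            \<longrightarrow> labeled_iso (csg_nodes V E k T) (csg_edges V E k T) (csg_label T)
                  (csg_nodes V1 (induced E V1) k T) (csg_edges V1 (induced E V1) k T) (csg_label T))
       \<and> (forest (csg_nodes V1 (induced E V1) k T) (csg_edges V1 (induced E V1) k T)
            \<and> injective_nbh (csg_nodes V1 (induced E V1) k T) (csg_edges V1 (induced E V1) k T) (csg_label T)
            \<and> forest (csg_nodes V2 (induced E V2) k T) (csg_edges V2 (induced E V2) k T)
            \<and> injective_nbh (csg_nodes V2 (induced E V2) k T) (csg_edges V2 (induced E V2) k T) (csg_label T)
            \<longrightarrow> forest (csg_nodes V E k T) (csg_edges V E k T)
              \<and> injective_nbh (csg_nodes V E k T) (csg_edges V E k T) (csg_label T))"
  proof -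
  have j: "V1 \<subseteq> V" "V2 \<subseteq> V" "V1 \<inter> V2 = T" "V1 \<union> V2 = V"
    "\<forall>e\<in>E. e \<in> induced E V1 \<or> e \<in> induced E V2" using assms(5) unfolding is_join_def by blast+
  have ed: "\<forall>e\<in>E. e \<subseteq> V1 \<or> e \<subseteq> V2" using j(5) unfolding induced_def by blast
  interpret J V E T V1 V2 k using j(3,4) ed assms(4) by unfold_locales
  interpret swap: J V E T V2 V1 k by (rule J_swap)
  have col: "colorings V E k \<noteq> {}" using assms(2) unfolding colorable_def .
  show ?thesis
  proof (intro conjI impI)
    assume "color_complete m k (csg_nodes V1 (induced E V1) k T) (csg_edges V1 (induced E V1) k T) (csg_label T)"
    then show "labeled_iso (csg_nodes V E k T) (csg_edges V E k T) (csg_label T)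
                  (csg_nodes V2 (induced E V2) k T) (csg_edges V2 (induced E V2) k T) (csg_label T)"
      using iso1 col by blast
  next
    assume "color_complete m k (csg_nodes V2 (induced E V2) k T) (csg_edges V2 (induced E V2) k T) (csg_label T)"
    then show "labeled_iso (csg_nodes V E k T) (csg_edges V E k T) (csg_label T)
                  (csg_nodes V1 (induced E V1) k T) (csg_edges V1 (induced E V1) k T) (csg_label T)"
      using swap.iso1 col by blast
  next
    assume h: "forest (csg_nodes V1 (induced E V1) k T) (csg_edges V1 (induced E V1) k T)
            \<and> injective_nbh (csg_nodes V1 (induced E V1) k T) (csg_edges V1 (induced E V1) k T) (csg_label T)
            \<and> forest (csg_nodes V2 (induced E V2) k T) (csg_edges V2 (induced E V2) k T)
            \<and> injective_nbh (csg_nodes V2 (induced E V2) k T) (csg_edges V2 (induced E V2) k T) (csg_label T)"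
    then show "forest (csg_nodes V E k T) (csg_edges V E k T)" using forest_G by blast
    from h show "injective_nbh (csg_nodes V E k T) (csg_edges V E k T) (csg_label T)" using inj_G by blast
  qed
qed

end
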